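(* Let $A$ be an associative (not necessarily unital) algebra over a field satisfying the identity $x_1\cdots x_n=x_{\sigma(1)}\cdots x_{\sigma(n)}$ for some $\sigma\in S_n$, and write $i=\sigma(1)$, $j=\sigma(n)$, where $i\ne 1$ and $j\ne n$. Then $H_{n+1}$ contains the cycles $(1\,2\,\ldots\,i)$ and $(j+1\,\ldots\,n+1)$, and $H_{n+2}$ contains the transpositions $(1\,2)$ and $(n+1\,\,n+2)$.
   Context: For each $k$, $H_k\subseteq S_k$ is the set of permutations $\tau$ such that $A$ satisfies $x_1\cdots x_k=x_{\tau(1)}\cdots x_{\tau(k)}$ (i.e. $a_1\cdots a_k=a_{\tau(1)}\cdots a_{\tau(k)}$ for all $a_1,\dots,a_k\in A$). *)

theory Defs
  imports Main "HOL-Combinatorics.Combinatorics"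
begin

fun wprod :: "'a::semigroup_mult list \<Rightarrow> 'a" where
  "wprod [x] = x"
| "wprod (x # y # xs) = x * wprod (y # xs)"
| "wprod [] = undefined"

text \<open>An associative, not necessarily unital, algebra over a field 'k:
  the type 'a is an associative ring (class ring has no unit), with a
  scalar multiplication making it a 'k-vector space, and multiplication bilinear.\<close>
definition assoc_algebra :: "('k::field \<Rightarrow> 'a::ring \<Rightarrow> 'a) \<Rightarrow> bool" where
  "assoc_algebra scale \<longleftrightarrow> vector_space scale \<and>
     (\<forall>c x y. scale c (x * y) = scale c x * y \<and> scale c (x * y) = x * scale c y)"

definition Hset :: "'a::semigroup_mult itself \<Rightarrow> nat \<Rightarrow> (nat \<Rightarrow> nat) set" where
  "Hset _ k = {\<tau>. \<tau> permutes {1..k} \<and>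
     (\<forall>a :: nat \<Rightarrow> 'a. wprod (map a [1..<k+1]) = wprod (map (\<lambda>t. a (\<tau> t)) [1..<k+1]))}"

end

theory Submission
  imports Defs
begin

lemma cyc_val: "cycle_of_list [p..<p+Suc d] k = (if p \<le> k \<and> k < p+d then k+1 else if k = p+d then p else k)"
proof (induction d arbitrary: p)
  case 0 then show ?case by simp
next
  case (Suc d)
  have e: "[p..<p+Suc (Suc d)] = p # [Suc p..<Suc p + Suc d]" by (simp add: upt_conv_Cons)
  have e2: "[Suc p..<Suc p + Suc d] = Suc p # [Suc (Suc p)..<Suc p + Suc d]" by (simp add: upt_conv_Cons)
  have c: "cycle_of_list [p..<p+Suc (Suc d)] = transpose p (Suc p) \<circ> cycle_of_list [Suc p..<Suc p + Suc d]"
    by (simp only: e e2 cycle_of_list.simps(1))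
  show ?case unfolding c comp_apply Suc[of "Suc p"] by (auto simp: transpose_def)
qed

lemma wprod_Cons: "xs \<noteq> [] \<Longrightarrow> wprod (x # xs) = x * wprod xs"
  by (cases xs) auto

lemma wprod_append: "xs \<noteq> [] \<Longrightarrow> ys \<noteq> [] \<Longrightarrow> wprod (xs @ ys) = wprod xs * wprod ys"
proof (induction xs rule: wprod.induct)
  case (1 x) then show ?case by (simp add: wprod_Cons)
next
  case (2 x y xs) then show ?case by (simp add: mult.assoc)
qed simp

lemma wprod_merge: "wprod (xs @ (x*y) # ys) = wprod (xs @ x # y # ys)"
proof (induction xs)
  case Nil then show ?case by (cases ys) (auto simp: mult.assoc)
next
  case (Cons z xs) then show ?case by (simp add: wprod_Cons)
qed

lemma wprod_snoc2: "wprod (xs @ [x, y]) = wprod (xs @ [x]) * y"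
  using wprod_append[of "xs@[x]" "[y]"] by simp

lemma upt_1_Cons: "1 < (j::nat) \<Longrightarrow> [1..<j] = 1 # [2..<j]"
  by (simp add: upt_conv_Cons numeral_2_eq_2)

lemma upt_split: "i \<le> k \<Longrightarrow> k < j \<Longrightarrow> [i..<j] = [i..<k] @ k # [k+1..<j]"
  proof -
  assume "i \<le> k" "k < j"
  have "[i..<k + (j-k)] = [i..<k] @ [k..<k+(j-k)]" using \<open>i \<le> k\<close> by (rule upt_add_eq_append)
  moreover have "[k..<j] = k # [k+1..<j]" using \<open>k < j\<close> by (simp add: upt_conv_Cons)
  ultimately show ?thesis using \<open>k < j\<close> by simp
qed

lemma left_ext:
  fixes \<rho> :: "nat \<Rightarrow> nat" and a :: "nat \<Rightarrow> 'a::semigroup_mult"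
  assumes p: "\<rho> permutes {1..m}" and m: "m \<ge> 1"
    and H: "\<And>v::nat \<Rightarrow> 'a. wprod (map v [1..<m+1]) = wprod (map (\<lambda>t. v (\<rho> t)) [1..<m+1])"
  shows "wprod (map a [1..<m+2]) = wprod (map a [2..<\<rho> 1+1] @ a 1 # map a [\<rho> 1+1..<m+2])"
proof -
  define a0 where "a0 = \<rho> 1"
  have a0: "1 \<le> a0" "a0 \<le> m" using permutes_in_image[OF p, of 1] m unfolding a0_def by auto
  define w where "w t = a (t+1)" for t
  define v where "v t = (if t = a0 then a 1 * a (a0+1) else w t)" for t
  have L1: "[1..<m+1] = [1..<a0] @ a0 # [a0+1..<m+1]"
    using a0 by (intro upt_split) auto
  have mw: "map w [i..<j] = map a [i+1..<j+1]" for i j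
    unfolding w_def by (induction j) auto
  have "map v [1..<m+1] = map a [2..<a0+1] @ (a 1 * a (a0+1)) # map a [a0+2..<m+2]"
  proof -
    have 1: "map v [1..<a0] = map a [1+1..<a0+1]" unfolding mw[symmetric] by (rule map_cong) (auto simp: v_def)
    have 2: "map v [a0+1..<m+1] = map a [a0+1+1..<m+1+1]" unfolding mw[symmetric] by (rule map_cong) (auto simp: v_def)
    have "map v [1..<m+1] = map v [1..<a0] @ v a0 # map v [a0+1..<m+1]" unfolding L1 by simp
    also have "\<dots> = map a [1+1..<a0+1] @ (a 1 * a (a0+1)) # map a [a0+1+1..<m+1+1]" unfolding 1 2 by (simp add: v_def)
    finally show ?thesis by (simp add: numeral_2_eq_2)
  qed
  hence "wprod (map v [1..<m+1]) = wprod (map a [2..<a0+1] @ a 1 # a (a0+1) # map a [a0+2..<m+2])"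
    by (simp add: wprod_merge)
  also have "map a [2..<a0+1] @ a 1 # a (a0+1) # map a [a0+2..<m+2] = map a [2..<a0+1] @ a 1 # map a [a0+1..<m+2]"
    using a0 upt_conv_Cons[of "a0+1" "m+2"] by simp
  finally have R: "wprod (map v [1..<m+1]) = wprod (map a [2..<a0+1] @ a 1 # map a [a0+1..<m+2])" .
  have L2: "[1..<m+1] = 1 # [2..<m+1]"
  proof -
    have "1 < m+1" using m by simp
    then show ?thesis by (rule upt_1_Cons)
  qed
  have inj: "\<rho> t \<noteq> a0" if "t \<in> set [2..<m+1]" for t
  proof -
    have "t \<noteq> 1" using that by auto
    then show ?thesis using permutes_inj[OF p] unfolding a0_def inj_def by metis
  qed
  have "map (\<lambda>t. v (\<rho> t)) [2..<m+1] = map (\<lambda>t. w (\<rho> t)) [2..<m+1]"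
    by (rule map_cong) (simp_all add: v_def inj)
  hence "wprod (map (\<lambda>t. v (\<rho> t)) [1..<m+1]) = wprod (a 1 # map (\<lambda>t. w (\<rho> t)) [1..<m+1])"
  proof -
    assume X: "map (\<lambda>t. v (\<rho> t)) [2..<m+1] = map (\<lambda>t. w (\<rho> t)) [2..<m+1]"
    have E: "map (\<lambda>t. v (\<rho> t)) [1..<m+1] = (a 1 * a (a0+1)) # map (\<lambda>t. w (\<rho> t)) [2..<m+1]"
      unfolding L2 list.map X by (simp add: v_def a0_def)
    have F: "map (\<lambda>t. w (\<rho> t)) [1..<m+1] = a (a0+1) # map (\<lambda>t. w (\<rho> t)) [2..<m+1]"
      unfolding L2 list.map by (simp add: w_def a0_def)
    show ?thesis unfolding E F using wprod_merge[of "[]" "a 1" "a (a0+1)" "map (\<lambda>t. w (\<rho> t)) [2..<m+1]"]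
      by (simp only: append_Nil)
  qed
  also have "\<dots> = a 1 * wprod (map w [1..<m+1])" using H[of w] m by (simp add: wprod_Cons)
  also have "\<dots> = wprod (map a [1..<m+2])"
  proof -
    have e1: "map w [1..<m+1] = map a [2..<m+2]" using mw[of 1 "m+1"] by (simp add: numeral_2_eq_2)
    have ne: "map a [2..<m+2] \<noteq> []" using m by simp
    have "1 < m+2" by simp
    show ?thesis unfolding e1 upt_1_Cons[OF \<open>1 < m+2\<close>] list.map wprod_Cons[OF ne] ..
  qed
  finally show ?thesis using H[of v] R unfolding a0_def by simp
qed

lemma right_ext:
  fixes \<rho> :: "nat \<Rightarrow> nat" and a :: "nat \<Rightarrow> 'a::semigroup_mult"
  assumes p: "\<rho> permutes {1..m}" and m: "m \<ge> 1"
    and H: "\<And>v::nat \<Rightarrow> 'a. wprod (map v [1..<m+1]) = wprod (map (\<lambda>t. v (\<rho> t)) [1..<m+1])"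
  shows "wprod (map a [1..<m+2]) = wprod (map a [1..<\<rho> m+1] @ a (m+1) # map a [\<rho> m+1..<m+1])"
proof -
  define b where "b = \<rho> m"
  have b: "1 \<le> b" "b \<le> m" using permutes_in_image[OF p, of m] m unfolding b_def by auto
  define v where "v t = (if t = b then a b * a (m+1) else a t)" for t
  have L1: "[1..<m+1] = [1..<b] @ b # [b+1..<m+1]"
    using b by (intro upt_split) auto
  have "map v [1..<m+1] = map a [1..<b] @ (a b * a (m+1)) # map a [b+1..<m+1]"
  proof -
    have "map v [1..<b] = map a [1..<b]" by (rule map_cong) (auto simp: v_def)
    moreover have "map v [b+1..<m+1] = map a [b+1..<m+1]" by (rule map_cong) (auto simp: v_def)
    ultimately show ?thesis unfolding L1 by (simp add: v_def)
  qed
  hence "wprod (map v [1..<m+1]) = wprod (map a [1..<b] @ a b # a (m+1) # map a [b+1..<m+1])"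
    by (simp add: wprod_merge)
  also have "map a [1..<b] @ a b # a (m+1) # map a [b+1..<m+1] = map a [1..<b+1] @ a (m+1) # map a [b+1..<m+1]"
    using b by simp
  finally have R: "wprod (map v [1..<m+1]) = wprod (map a [1..<b+1] @ a (m+1) # map a [b+1..<m+1])" .
  have L2: "[1..<m+1] = [1..<m] @ [m]" using m by simp
  have inj: "\<rho> t \<noteq> b" if "t \<in> set [1..<m]" for t
  proof -
    have "t \<noteq> m" using that by simp
    then show ?thesis using permutes_inj[OF p] unfolding b_def inj_def by metis
  qed
  have "map (\<lambda>t. v (\<rho> t)) [1..<m] = map (\<lambda>t. a (\<rho> t)) [1..<m]"
    by (rule map_cong) (simp_all add: v_def inj)
  hence "map (\<lambda>t. v (\<rho> t)) [1..<m+1] = map (\<lambda>t. a (\<rho> t)) [1..<m] @ [a b * a (m+1)]"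
    unfolding L2 by (simp add: v_def b_def)
  hence "wprod (map (\<lambda>t. v (\<rho> t)) [1..<m+1]) = wprod (map (\<lambda>t. a (\<rho> t)) [1..<m] @ [a b, a (m+1)])"
    using wprod_merge[where ys="[]"] by simp
  also have "map (\<lambda>t. a (\<rho> t)) [1..<m] @ [a b, a (m+1)] = map (\<lambda>t. a (\<rho> t)) [1..<m+1] @ [a (m+1)]"
    unfolding L2 b_def by simp
  finally have "wprod (map (\<lambda>t. v (\<rho> t)) [1..<m+1]) = wprod (map (\<lambda>t. a (\<rho> t)) [1..<m+1] @ [a (m+1)])" .
  also have "\<dots> = wprod (map a [1..<m+1]) * a (m+1)" using H[of a] m by (simp add: wprod_snoc2)
  also have "\<dots> = wprod (map a [1..<m+2])"
  proof -
    have "[1..<m+2] = [1..<m] @ [m, m+1]" "[1..<m+1] = [1..<m] @ [m]" using m by simp_all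
    then show ?thesis using wprod_snoc2[of "map a [1..<m]" "a m" "a (m+1)"] by simp
  qed
  finally show ?thesis using H[of v] R unfolding b_def by simp
qed

lemma Hset_inv:
  assumes "\<tau> \<in> Hset TYPE('a::semigroup_mult) k"
  shows "inv \<tau> \<in> Hset TYPE('a) k"
proof -
  have p: "\<tau> permutes {1..k}" and H: "\<And>a::nat\<Rightarrow>'a. wprod (map a [1..<k+1]) = wprod (map (\<lambda>t. a (\<tau> t)) [1..<k+1])"
    using assms unfolding Hset_def by auto
  have "wprod (map a [1..<k+1]) = wprod (map (\<lambda>t. a (inv \<tau> t)) [1..<k+1])" for a :: "nat \<Rightarrow> 'a"
    using H[of "\<lambda>t. a (inv \<tau> t)"] permutes_inverses(2)[OF p] by simp
  then show ?thesis using permutes_inv[OF p] unfolding Hset_def by auto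
qed

lemma map_shift: "map (\<lambda>t. a (t+1)) [i..<j] = map a [i+1..<j+1]"
  by (induction j) auto

theorem corollary2p9:
  fixes scale :: "'k::field \<Rightarrow> 'a::ring \<Rightarrow> 'a"
    and n :: nat and \<sigma> :: "nat \<Rightarrow> nat"
  assumes "assoc_algebra scale"
    and "\<sigma> \<in> Hset TYPE('a) n"
    and "\<sigma> 1 \<noteq> 1" and "\<sigma> n \<noteq> n"
  shows "cycle_of_list [1..<\<sigma> 1 + 1] \<in> Hset TYPE('a) (n + 1)
    \<and> cycle_of_list [\<sigma> n + 1..<n + 2] \<in> Hset TYPE('a) (n + 1)
    \<and> transpose 1 2 \<in> Hset TYPE('a) (n + 2)
    \<and> transpose (n + 1) (n + 2) \<in> Hset TYPE('a) (n + 2)"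
proof -
  have p: "\<sigma> permutes {1..n}" and H: "\<And>a::nat\<Rightarrow>'a. wprod (map a [1..<n+1]) = wprod (map (\<lambda>t. a (\<sigma> t)) [1..<n+1])"
    using assms(2) unfolding Hset_def by auto
  have n1: "n \<ge> 1"
  proof (rule ccontr)
    assume "\<not> n \<ge> 1" then have "1 \<notin> {1..n}" by simp
    then show False using permutes_not_in[OF p] assms(3) by blast
  qed
  define i where "i = \<sigma> 1"
  define j where "j = \<sigma> n"
  have i: "2 \<le> i" "i \<le> n" using permutes_in_image[OF p, of 1] n1 assms(3) unfolding i_def by auto
  have j: "1 \<le> j" "j < n" using permutes_in_image[OF p, of n] n1 assms(4) unfolding j_def by auto
  define cL where "cL = cycle_of_list [1..<i+1]"
  define cR where "cR = cycle_of_list [j+1..<n+2]"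
  have cLv: "cL t = (if 1 \<le> t \<and> t < i then t+1 else if t = i then 1 else t)" for t
  proof -
    have "[1..<i+1] = [1..<1 + Suc (i-1)]" using i by simp
    then show ?thesis unfolding cL_def using cyc_val[of 1 "i-1" t] i by auto
  qed
  have cRv: "cR t = (if j+1 \<le> t \<and> t < n+1 then t+1 else if t = n+1 then j+1 else t)" for t
  proof -
    have "[j+1..<n+2] = [j+1..<(j+1) + Suc (n-j)]" using j by simp
    then show ?thesis unfolding cR_def using cyc_val[of "j+1" "n-j" t] j by auto
  qed
  have cLp: "cL permutes {1..n+1}"
    unfolding cL_def by (rule permutes_subset[OF cycle_permutes]) (use i in auto)
  have cRp: "cR permutes {1..n+1}"
    unfolding cR_def by (rule permutes_subset[OF cycle_permutes]) (use j in auto)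
  have HL: "wprod (map a [1..<n+1+1]) = wprod (map (\<lambda>t. a (cL t)) [1..<n+1+1])" for a :: "nat \<Rightarrow> 'a"
  proof -
    have "wprod (map a [1..<n+2]) = wprod (map a [2..<i+1] @ a 1 # map a [i+1..<n+2])"
      using left_ext[OF p n1 H] unfolding i_def .
    also have "map a [2..<i+1] @ a 1 # map a [i+1..<n+2] = map (\<lambda>t. a (cL t)) [1..<n+2]"
    proof -
      have s: "[1..<n+2] = [1..<i] @ i # [i+1..<n+2]" using i by (intro upt_split) auto
      have "map (\<lambda>t. a (cL t)) [1..<i] = map (\<lambda>t. a (t+1)) [1..<i]" by (rule map_cong) (auto simp: cLv)
      moreover have "map (\<lambda>t. a (cL t)) [i+1..<n+2] = map a [i+1..<n+2]" by (rule map_cong) (auto simp: cLv)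
      moreover have "map a [2..<i+1] = map a [1+1..<i+1]" by (simp only: one_add_one)
      ultimately show ?thesis unfolding s map_shift by (simp add: cLv)
    qed
    finally show ?thesis by simp
  qed
  have HR: "wprod (map a [1..<n+1+1]) = wprod (map (\<lambda>t. a (cR t)) [1..<n+1+1])" for a :: "nat \<Rightarrow> 'a"
  proof -
    let ?a = "\<lambda>t. a (cR t)"
    have "wprod (map ?a [1..<n+2]) = wprod (map ?a [1..<j+1] @ ?a (n+1) # map ?a [j+1..<n+1])"
      using right_ext[OF p n1 H] unfolding j_def .
    also have "map ?a [1..<j+1] @ ?a (n+1) # map ?a [j+1..<n+1] = map a [1..<n+2]"
    proof -
      have s0: "[1..<n+2] = [1..<n+1+1]" by (simp only: add.assoc one_add_one)
      have s: "[1..<n+1+1] = [1..<j+1] @ (j+1) # [j+1+1..<n+1+1]" using j by (intro upt_split) auto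
      have m1: "map ?a [1..<j+1] = map a [1..<j+1]" by (rule map_cong) (use j in \<open>auto simp: cRv\<close>)
      have "map ?a [j+1..<n+1] = map (\<lambda>t. a (t+1)) [j+1..<n+1]" by (rule map_cong) (auto simp: cRv)
      then have m2: "map ?a [j+1..<n+1] = map a [j+1+1..<n+1+1]" unfolding map_shift .
      have "?a (n+1) = a (j+1)" by (simp add: cRv)
      then show ?thesis unfolding s0 s map_append list.map m1 m2 by simp
    qed
    finally show ?thesis by simp
  qed
  have mL: "cL \<in> Hset TYPE('a) (n+1)" unfolding Hset_def using cLp HL by blast
  have mR: "cR \<in> Hset TYPE('a) (n+1)" unfolding Hset_def using cRp HR by blast
  have T1: "transpose 1 2 \<in> Hset TYPE('a) (n+2)"
  proof -
    have HL': "\<And>a::nat\<Rightarrow>'a. wprod (map a [1..<(n+1)+1]) = wprod (map (\<lambda>t. a (cL t)) [1..<(n+1)+1])"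
      using HL by simp
    have c1: "cL 1 = 2" using i by (simp add: cLv)
    have "wprod (map a [1..<n+2+1]) = wprod (map (\<lambda>t. a (transpose 1 2 t)) [1..<n+2+1])" for a :: "nat \<Rightarrow> 'a"
    proof -
      have "wprod (map a [1..<(n+1)+2]) = wprod (map a [2..<cL 1+1] @ a 1 # map a [cL 1+1..<(n+1)+2])"
        using left_ext[OF cLp _ HL'] by simp
      also have "map a [2..<cL 1+1] @ a 1 # map a [cL 1+1..<(n+1)+2] = map (\<lambda>t. a (transpose 1 2 t)) [1..<(n+1)+2]"
      proof -
        have s: "[1..<(n+1)+2] = [1..<2] @ 2 # [2+1..<(n+1)+2]" by (intro upt_split) auto
        have "map (\<lambda>t. a (transpose 1 2 t)) [2+1..<(n+1)+2] = map a [2+1..<(n+1)+2]"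
          by (rule map_cong) (auto simp: transpose_def)
        moreover have "[1..<2] = [1::nat]" by (simp add: numeral_2_eq_2)
        moreover have "[2..<2+1] = [2::nat]" by simp
        ultimately show ?thesis unfolding s c1 by (simp add: transpose_def)
      qed
      finally show ?thesis by (simp add: add.assoc)
    qed
    moreover have "transpose 1 2 permutes {1..n+2}" by (rule permutes_swap_id) auto
    ultimately show ?thesis unfolding Hset_def by blast
  qed
  have T2: "transpose (n+1) (n+2) \<in> Hset TYPE('a) (n+2)"
  proof -
    have mI: "inv cR \<in> Hset TYPE('a) (n+1)" using Hset_inv[OF mR] .
    have pI: "inv cR permutes {1..n+1}" and HI: "\<And>a::nat\<Rightarrow>'a. wprod (map a [1..<(n+1)+1]) = wprod (map (\<lambda>t. a (inv cR t)) [1..<(n+1)+1])"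
      using mI unfolding Hset_def by auto
    have c1: "inv cR (n+1) = n" using permutes_inv_eq[OF cRp] j by (simp add: cRv)
    have "wprod (map a [1..<n+2+1]) = wprod (map (\<lambda>t. a (transpose (n+1) (n+2) t)) [1..<n+2+1])" for a :: "nat \<Rightarrow> 'a"
    proof -
      have "wprod (map a [1..<(n+1)+2]) = wprod (map a [1..<inv cR (n+1)+1] @ a ((n+1)+1) # map a [inv cR (n+1)+1..<(n+1)+1])"
        using right_ext[OF pI _ HI] by simp
      also have "map a [1..<inv cR (n+1)+1] @ a ((n+1)+1) # map a [inv cR (n+1)+1..<(n+1)+1] = map (\<lambda>t. a (transpose (n+1) (n+2) t)) [1..<(n+1)+2]"
      proof -
        have s: "[1..<(n+1)+2] = [1..<n+1] @ [n+1, n+2]" by simp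
        have "map (\<lambda>t. a (transpose (n+1) (n+2) t)) [1..<n+1] = map a [1..<n+1]"
          by (rule map_cong) (auto simp: transpose_def)
        then show ?thesis unfolding s c1 by (simp add: transpose_def)
      qed
      finally show ?thesis by (simp add: add.assoc)
    qed
    moreover have "transpose (n+1) (n+2) permutes {1..n+2}" by (rule permutes_swap_id) auto
    ultimately show ?thesis unfolding Hset_def by blast
  qed
  show ?thesis using mL mR T1 T2 unfolding cL_def cR_def i_def j_def by blast
qed

end
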